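(* Let $C$ be a weakly compact convex subset of a Banach space $X$ and let $T:C\to C$ be an orbitally Kannan mapping which diminishes the radius of orbits. Then: (1) if $T$ has no fixed point, there exists a closed convex subset $K_0\subseteq C$ with $T(K_0)\subseteq K_0$, $\delta(K_0)>0$, and $r_x(O_T(x))=\delta(K_0)$ for all $x\in K_0$; (2) if for each closed convex subset $K_0$ of $C$ with $\delta(K_0)>0$ there exists $x_0\in K_0$ such that $r_{x_0}(O_T(y))<\delta(K_0)$ for all $y\in K_0$, then $T$ has a unique fixed point.
   Context: For $x\in X$ and $A\subseteq X$, $r_x(A)=\sup\{\|x-y\|:y\in A\}$ and $\delta(A)=\sup\{\|u-v\|:u,v\in A\}$; $O_T(x)=\{x,Tx,T^2x,\dots\}$. $T$ is orbitally Kannan if $\|Tx-Ty\|\le\frac12\big(r_x(O_T(x))+r_y(O_T(y))\big)$ for all $x,y\in C$. $T$ diminishes the radius of orbits if $r_{Tx}(O_T(Tx))\le r_x(O_T(x))$ for all $x\in C$. *)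

theory Defs
  imports "HOL-Analysis.Analysis"
begin

definition weak_topology :: "('a::real_normed_vector) topology" where
  "weak_topology = topology_generated_by
     {{x. f x \<in> U} | f U. bounded_linear (f :: 'a \<Rightarrow> real) \<and> open U}"

definition weakly_compact :: "('a::real_normed_vector) set \<Rightarrow> bool" where
  "weakly_compact C \<longleftrightarrow> compactin weak_topology C"

definition orbit :: "('a \<Rightarrow> 'a) \<Rightarrow> 'a \<Rightarrow> 'a set" where
  "orbit T x = range (\<lambda>n. (T ^^ n) x)"

definition radius_at :: "'a::real_normed_vector \<Rightarrow> 'a set \<Rightarrow> real" where
  "radius_at x A = (SUP y\<in>A. norm (x - y))"

definition orbitally_kannan :: "'a::real_normed_vector set \<Rightarrow> ('a \<Rightarrow> 'a) \<Rightarrow> bool" where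
  "orbitally_kannan C T \<longleftrightarrow> (\<forall>x\<in>C. \<forall>y\<in>C.
     norm (T x - T y) \<le> (radius_at x (orbit T x) + radius_at y (orbit T y)) / 2)"

definition diminishes_orbit_radius :: "'a::real_normed_vector set \<Rightarrow> ('a \<Rightarrow> 'a) \<Rightarrow> bool" where
  "diminishes_orbit_radius C T \<longleftrightarrow> (\<forall>x\<in>C.
     radius_at (T x) (orbit T (T x)) \<le> radius_at x (orbit T x))"

end

theory Submission
  imports Defs
begin

definition goodG :: "('a::real_vector \<Rightarrow> real) \<Rightarrow> 'a \<Rightarrow> ('a \<times> real) set \<Rightarrow> bool" where
  "goodG p x0 G \<longleftrightarrow> (0,0) \<in> G \<and>
     (\<forall>x a y b. (x,a)\<in>G \<longrightarrow> (y,b)\<in>G \<longrightarrow> (x+y, a+b) \<in> G) \<and>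
     (\<forall>x a r. (x,a)\<in>G \<longrightarrow> (r *\<^sub>R x, r*a) \<in> G) \<and>
     (\<forall>a. (0,a)\<in>G \<longrightarrow> a = 0) \<and>
     (\<forall>x a. (x,a)\<in>G \<longrightarrow> a \<le> p x) \<and>
     (\<forall>t. (t *\<^sub>R x0, t) \<in> G)"

lemma HB_step:
  fixes p :: "'a::real_vector \<Rightarrow> real"
  assumes sub: "\<And>x y. p (x + y) \<le> p x + p y"
    and hom: "\<And>a x. a > 0 \<Longrightarrow> p (a *\<^sub>R x) = a * p x"
    and G: "goodG p x0 G" and y: "y \<notin> fst ` G"
  shows "\<exists>G'. goodG p x0 G' \<and> G \<subseteq> G' \<and> G' \<noteq> G"
proof -
  have G0: "(0,0) \<in> G" and Gadd: "\<And>x a z b. (x,a)\<in>G \<Longrightarrow> (z,b)\<in>G \<Longrightarrow> (x+z, a+b) \<in> G"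
    and Gsc: "\<And>x a r. (x,a)\<in>G \<Longrightarrow> (r *\<^sub>R x, r*a) \<in> G"
    and Gfun: "\<And>a. (0,a)\<in>G \<Longrightarrow> a = 0"
    and Gp: "\<And>x a. (x,a)\<in>G \<Longrightarrow> a \<le> p x"
    and Gx0: "\<And>t. (t *\<^sub>R x0, t) \<in> G"
    using G unfolding goodG_def by blast+
  define S where "S = {a - p (x - y) | x a. (x,a) \<in> G}"
  define c where "c = Sup S"
  have Sne: "S \<noteq> {}" using G0 unfolding S_def by blast
  have Sbd: "s \<le> p (z + y) - b" if "s \<in> S" "(z,b) \<in> G" for s z b
  proof -
    obtain x a where xa: "s = a - p (x - y)" "(x,a) \<in> G" using \<open>s \<in> S\<close> unfolding S_def by blast
    have "a + b \<le> p (x + z)" using Gp[OF Gadd[OF xa(2) that(2)]] .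
    also have "x + z = (x - y) + (z + y)" by simp
    finally have "a + b \<le> p (x - y) + p (z + y)" using sub[of "x - y" "z + y"] by linarith
    then show ?thesis using xa by linarith
  qed
  have bdd: "bdd_above S" using Sbd G0 unfolding bdd_above_def by blast
  have cup: "a - p (x - y) \<le> c" if "(x,a)\<in>G" for x a
    unfolding c_def by (rule cSup_upper[OF _ bdd]) (use that S_def in blast)
  have clow: "c \<le> p (z + y) - b" if "(z,b)\<in>G" for z b
    unfolding c_def by (rule cSup_least[OF Sne]) (use Sbd that in blast)
  define G' where "G' = {(x + t *\<^sub>R y, a + t * c) | x a t. (x,a) \<in> G}"
  have memG': "(x + t *\<^sub>R y, a + t * c) \<in> G'" if "(x,a)\<in>G" for x a t
    using that unfolding G'_def by blast
  have "goodG p x0 G'"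
    unfolding goodG_def
  proof (intro conjI allI impI)
    show "(0,0) \<in> G'" using memG'[OF G0, of 0] by simp
  next
    fix u a v b assume "(u,a) \<in> G'" "(v,b) \<in> G'"
    then obtain x1 a1 t1 x2 a2 t2 where h: "(u,a) = (x1 + t1 *\<^sub>R y, a1 + t1 * c)" "(x1,a1)\<in>G"
      "(v,b) = (x2 + t2 *\<^sub>R y, a2 + t2 * c)" "(x2,a2)\<in>G" unfolding G'_def by blast
    have "((x1+x2) + (t1+t2) *\<^sub>R y, (a1+a2) + (t1+t2)*c) \<in> G'" by (rule memG'[OF Gadd[OF h(2) h(4)]])
    then show "(u+v, a+b) \<in> G'" using h by (simp add: algebra_simps)
  next
    fix u a r assume "(u,a) \<in> G'"
    then obtain x1 a1 t1 where h: "(u,a) = (x1 + t1 *\<^sub>R y, a1 + t1 * c)" "(x1,a1)\<in>G"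
      unfolding G'_def by blast
    have "(r *\<^sub>R x1 + (r*t1) *\<^sub>R y, r*a1 + (r*t1)*c) \<in> G'" by (rule memG'[OF Gsc[OF h(2)]])
    then show "(r *\<^sub>R u, r*a) \<in> G'" using h by (simp add: algebra_simps)
  next
    fix b assume "(0,b) \<in> G'"
    then obtain x a t where h: "0 = x + t *\<^sub>R y" "b = a + t * c" "(x,a)\<in>G"
      unfolding G'_def by blast
    show "b = 0"
    proof (cases "t = 0")
      case True then show ?thesis using h Gfun by simp
    next
      case False
      have "y = (-(1/t)) *\<^sub>R x" using h(1) False
        by (metis add.commute add_diff_cancel_right' diff_0 scaleR_minus_left scaleR_right_diff_distrib scaleR_scaleR nonzero_divide_eq_eq divide_inverse_commute mult.commute scaleR_one eq_divide_eq mult_1 mult_1_right)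
      then have "y \<in> fst ` G" using Gsc[OF h(3), of "-(1/t)"] by (metis fst_conv image_eqI)
      then show ?thesis using y by blast
    qed
  next
    fix u b assume "(u,b) \<in> G'"
    then obtain x a t where h: "u = x + t *\<^sub>R y" "b = a + t * c" "(x,a)\<in>G"
      unfolding G'_def by blast
    show "b \<le> p u"
    proof (cases "t > 0")
      case True
      have "c \<le> p ((1/t) *\<^sub>R x + y) - (1/t)*a" using clow[OF Gsc[OF h(3)]] .
      then have "t * c \<le> t * p ((1/t) *\<^sub>R x + y) - a" using True
        by (simp add: field_simps)
      also have "t * p ((1/t) *\<^sub>R x + y) = p (t *\<^sub>R ((1/t) *\<^sub>R x + y))" using hom[OF True] by simp
      also have "t *\<^sub>R ((1/t) *\<^sub>R x + y) = u" using True h(1) by (simp add: scaleR_add_right)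
      finally show ?thesis using h by linarith
    next
      case False
      show ?thesis
      proof (cases "t = 0")
        case True then show ?thesis using h Gp by simp
      next
        case False
        define s where "s = -t"
        have s: "s > 0" using False \<open>\<not> t > 0\<close> s_def by simp
        have "(1/s)*a - p ((1/s) *\<^sub>R x - y) \<le> c" using cup[OF Gsc[OF h(3)]] .
        then have "a - s * p ((1/s) *\<^sub>R x - y) \<le> s * c" using s
          by (simp add: field_simps)
        also have "s * p ((1/s) *\<^sub>R x - y) = p (s *\<^sub>R ((1/s) *\<^sub>R x - y))" using hom[OF s] by simp
        also have "s *\<^sub>R ((1/s) *\<^sub>R x - y) = u" using s h(1) s_def by (simp add: scaleR_diff_right)
        finally show ?thesis using h s_def by simp
      qed
    qed
  next
    fix t show "(t *\<^sub>R x0, t) \<in> G'" using memG'[OF Gx0, of t 0] by simp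
  qed
  moreover have "G \<subseteq> G'" using memG'[of _ _ 0] by force
  moreover have "(y, c) \<in> G'" using memG'[OF G0, of 1] by simp
  then have "G' \<noteq> G" using y by force
  ultimately show ?thesis by blast
qed

lemma HB:
  fixes p :: "'a::real_vector \<Rightarrow> real"
  assumes sub: "\<And>x y. p (x + y) \<le> p x + p y"
    and hom: "\<And>a x. a > 0 \<Longrightarrow> p (a *\<^sub>R x) = a * p x"
    and base: "\<And>t. t \<le> p (t *\<^sub>R x0)"
  shows "\<exists>f. (\<forall>x y. f (x + y) = f x + f y) \<and> (\<forall>r x. f (r *\<^sub>R x) = r * f x) \<and> f x0 = 1 \<and> (\<forall>x. f x \<le> p x)"
proof -
  have p0: "p 0 = 0" using hom[of 2 0] by simp
  have x0: "x0 \<noteq> 0" using base[of 1] p0 by auto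
  define G0 where "G0 = range (\<lambda>t. (t *\<^sub>R x0, t))"
  define A where "A = {G. goodG p x0 G}"
  have G0A: "G0 \<in> A"
  proof -
    have m: "(t *\<^sub>R x0, t) \<in> G0" for t unfolding G0_def by blast
    have e: "\<exists>t. x = t *\<^sub>R x0 \<and> a = t" if "(x,a) \<in> G0" for x a
      using that unfolding G0_def by blast
    have "goodG p x0 G0" unfolding goodG_def
    proof (intro conjI allI impI)
      show "(0,0) \<in> G0" using m[of 0] by simp
    next
      fix x a y b assume "(x,a) \<in> G0" "(y,b) \<in> G0"
      then obtain s t where "x = s *\<^sub>R x0" "a = s" "y = t *\<^sub>R x0" "b = t" using e by blast
      then show "(x + y, a + b) \<in> G0" using m[of "s + t"] by (simp add: scaleR_add_left)
    next
      fix x a r assume "(x,a) \<in> G0"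
      then obtain s where "x = s *\<^sub>R x0" "a = s" using e by blast
      then show "(r *\<^sub>R x, r * a) \<in> G0" using m[of "r * s"] by simp
    next
      fix a assume "(0,a) \<in> G0"
      then obtain s where "0 = s *\<^sub>R x0" "a = s" using e by blast
      then show "a = 0" using x0 by simp
    next
      fix x a assume "(x,a) \<in> G0"
      then obtain s where "x = s *\<^sub>R x0" "a = s" using e by blast
      then show "a \<le> p x" using base[of s] by simp
    next
      fix t show "(t *\<^sub>R x0, t) \<in> G0" by (rule m)
    qed
    then show ?thesis unfolding A_def by simp
  qed
  have "\<exists>M\<in>A. \<forall>X\<in>A. M \<subseteq> X \<longrightarrow> X = M"
  proof (rule subset_Zorn)
    fix C assume ch: "subset.chain A C"
    show "\<exists>U\<in>A. \<forall>X\<in>C. X \<subseteq> U"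
    proof (cases "C = {}")
      case True then show ?thesis using G0A by blast
    next
      case False
      have CA: "C \<subseteq> A" and tot: "\<And>X Y. X \<in> C \<Longrightarrow> Y \<in> C \<Longrightarrow> X \<subseteq> Y \<or> Y \<subseteq> X"
        using ch by (auto simp: subset_chain_def)
      have gd: "\<And>X. X \<in> C \<Longrightarrow> goodG p x0 X" using CA A_def by blast
      obtain X0 where X0: "X0 \<in> C" using False by blast
      have gdD: "(0,0) \<in> X" "\<And>x a y b. (x,a)\<in>X \<Longrightarrow> (y,b)\<in>X \<Longrightarrow> (x+y, a+b) \<in> X"
        "\<And>x a r. (x,a)\<in>X \<Longrightarrow> (r *\<^sub>R x, r*a) \<in> X"
        "\<And>a. (0,a)\<in>X \<Longrightarrow> a = 0" "\<And>x a. (x,a)\<in>X \<Longrightarrow> a \<le> p x" "\<And>t. (t *\<^sub>R x0, t) \<in> X"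
        if "X \<in> C" for X using gd[OF that] unfolding goodG_def by blast+
      have "goodG p x0 (\<Union>C)" unfolding goodG_def
      proof (intro conjI allI impI)
        show "(0,0) \<in> \<Union>C" using gdD(1)[OF X0] X0 by blast
      next
        fix x a y b assume "(x,a) \<in> \<Union>C" "(y,b) \<in> \<Union>C"
        then obtain X Y where "X \<in> C" "Y \<in> C" "(x,a)\<in>X" "(y,b)\<in>Y" by blast
        then obtain Z where "Z \<in> C" "(x,a)\<in>Z" "(y,b)\<in>Z" using tot by blast
        then show "(x+y,a+b) \<in> \<Union>C" using gdD(2) by blast
      next
        fix x a r assume "(x,a) \<in> \<Union>C"
        then show "(r *\<^sub>R x, r*a) \<in> \<Union>C" using gdD(3) by blast
      next
        fix a assume "(0,a) \<in> \<Union>C"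
        then show "a = 0" using gdD(4) by blast
      next
        fix x a assume "(x,a) \<in> \<Union>C"
        then show "a \<le> p x" using gdD(5) by blast
      next
        fix t show "(t *\<^sub>R x0, t) \<in> \<Union>C" using gdD(6)[OF X0] X0 by blast
      qed
      then show ?thesis unfolding A_def by blast
    qed
  qed
  then obtain M where MA: "goodG p x0 M" and Mmax: "\<And>X. goodG p x0 X \<Longrightarrow> M \<subseteq> X \<Longrightarrow> X = M"
    unfolding A_def by blast
  have full: "\<exists>a. (x,a) \<in> M" for x
  proof (rule ccontr)
    assume "\<nexists>a. (x,a) \<in> M"
    then have "x \<notin> fst ` M" by force
    from HB_step[OF sub hom MA this] Mmax show False by blast
  qed
  have Madd: "\<And>x a z b. (x,a)\<in>M \<Longrightarrow> (z,b)\<in>M \<Longrightarrow> (x+z, a+b) \<in> M"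
    and Msc: "\<And>x a r. (x,a)\<in>M \<Longrightarrow> (r *\<^sub>R x, r*a) \<in> M"
    and Mfun: "\<And>a. (0,a)\<in>M \<Longrightarrow> a = 0"
    and Mp: "\<And>x a. (x,a)\<in>M \<Longrightarrow> a \<le> p x"
    and Mx0: "\<And>t. (t *\<^sub>R x0, t) \<in> M"
    using MA unfolding goodG_def by blast+
  have uniq: "a = b" if "(x,a)\<in>M" "(x,b)\<in>M" for x a b
  proof -
    have "(x + (-1) *\<^sub>R x, a + (-1)*b) \<in> M" using Madd[OF that(1) Msc[OF that(2)]] .
    then have "(0, a - b) \<in> M" by simp
    then show ?thesis using Mfun by fastforce
  qed
  define f where "f x = (THE a. (x,a) \<in> M)" for x
  have fM: "(x, f x) \<in> M" for x
  proof -
    obtain a where a: "(x,a) \<in> M" using full by blast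
    have "(THE a. (x,a) \<in> M) = a" by (rule the_equality[where P="\<lambda>b. (x,b) \<in> M"]) (use a uniq in auto)
    then show ?thesis unfolding f_def using a by simp
  qed
  have fval: "f x = a" if "(x,a) \<in> M" for x a using uniq[OF fM that] .
  have "\<forall>x y. f (x + y) = f x + f y" using fval[OF Madd[OF fM fM]] by blast
  moreover have "\<forall>r x. f (r *\<^sub>R x) = r * f x" using fval[OF Msc[OF fM]] by blast
  moreover have "f x0 = 1" using fval[OF Mx0[of 1]] by simp
  moreover have "f x \<le> p x" for x using Mp[OF fM] .
  ultimately show ?thesis by blast
qed

lemma separation:
  fixes K :: "'a::real_normed_vector set"
  assumes cl: "closed K" and cv: "convex K" and pK: "p \<notin> K"
  shows "\<exists>(f::'a\<Rightarrow>real) c. bounded_linear f \<and> c < f p \<and> (\<forall>k\<in>K. f k \<le> c)"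
proof (cases "K = {}")
  case True
  show ?thesis
    apply (rule exI[of _ "\<lambda>x. 0"])
    using True lt_ex[of "0::real"] by simp
next
  case False
  then obtain k0 where k0: "k0 \<in> K" by blast
  have "open (- K)" "p \<in> - K" using cl pK by auto
  then obtain r where r: "r > 0" "ball p r \<subseteq> - K" by (meson open_contains_ball)
  define U where "U = {k - k0 + w | k w. k \<in> K \<and> norm w < r}"
  have ballU: "v \<in> U" if "norm v < r" for v
    unfolding U_def using k0 that by force
  have convU: "a *\<^sub>R u + b *\<^sub>R v \<in> U" if hyp: "u \<in> U" "v \<in> U" "a \<ge> 0" "b \<ge> 0" "a + b = 1" for u v a b
  proof -
    obtain k1 w1 k2 w2 where h: "u = k1 - k0 + w1" "k1 \<in> K" "norm w1 < r" "v = k2 - k0 + w2" "k2 \<in> K" "norm w2 < r"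
      using hyp(1,2) unfolding U_def by blast
    have kk: "a *\<^sub>R k1 + b *\<^sub>R k2 \<in> K" using cv h hyp unfolding convex_def by blast
    have "norm (a *\<^sub>R w1 + b *\<^sub>R w2) \<le> a * norm w1 + b * norm w2"
      by (metis (no_types, lifting) norm_scaleR norm_triangle_ineq abs_of_nonneg hyp(3,4))
    also have "\<dots> < r"
    proof -
      have "a * norm w1 \<le> a * r" "b * norm w2 \<le> b * r" using h hyp by (auto intro: mult_left_mono)
      moreover have "a * norm w1 < a * r \<or> b * norm w2 < b * r"
        using h hyp by (cases "a > 0") auto
      moreover have "a * r + b * r = r" using hyp(5) by (metis distrib_right mult_1)
      ultimately show ?thesis by (elim disjE) linarith+
    qed
    finally have nw: "norm (a *\<^sub>R w1 + b *\<^sub>R w2) < r" .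
    have "a *\<^sub>R u + b *\<^sub>R v = (a *\<^sub>R k1 + b *\<^sub>R k2) - (a + b) *\<^sub>R k0 + (a *\<^sub>R w1 + b *\<^sub>R w2)"
      unfolding h(1) h(4) by (simp add: algebra_simps)
    then have "a *\<^sub>R u + b *\<^sub>R v = (a *\<^sub>R k1 + b *\<^sub>R k2) - k0 + (a *\<^sub>R w1 + b *\<^sub>R w2)"
      using hyp(5) by simp
    then show ?thesis using kk nw unfolding U_def by blast
  qed
  define S where "S x = {t. 0 < t \<and> (1/t) *\<^sub>R x \<in> U}" for x
  define mu where "mu x = Inf (S x)" for x
  have inS: "t \<in> S x" if "t > 0" "norm x < r * t" for x t
  proof -
    have "norm ((1/t) *\<^sub>R x) = norm x / t" using that by simp
    also have "\<dots> < r" using that by (simp add: divide_less_eq mult.commute)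
    finally show ?thesis unfolding S_def using ballU that by auto
  qed
  have Sne: "S x \<noteq> {}" for x
  proof -
    have a: "2 * norm x / r + 1 > 0" using r by (simp add: add_nonneg_pos)
    have "r * (2 * norm x / r + 1) = 2 * norm x + r" using r by (simp add: field_simps)
    moreover have "norm x < 2 * norm x + r" using r norm_ge_zero[of x] by linarith
    ultimately have "norm x < r * (2 * norm x / r + 1)" by simp
    then show ?thesis using inS[OF a] by blast
  qed
  have Sbdd: "bdd_below (S x)" for x unfolding S_def bdd_below_def by (rule exI[of _ 0]) auto
  have mu_le: "mu x \<le> t" if "t \<in> S x" for x t unfolding mu_def by (rule cInf_lower[OF that Sbdd])
  have mu_nonneg: "mu x \<ge> 0" for x unfolding mu_def by (rule cInf_greatest[OF Sne]) (auto simp: S_def)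
  have mu_bound: "mu x \<le> 2 / r * norm x" for x
  proof (rule field_le_epsilon)
    fix e :: real assume e: "e > 0"
    have "2 / r * norm x + e \<in> S x"
    proof (rule inS)
      show "0 < 2 / r * norm x + e" using e r by (simp add: add_nonneg_pos)
      have "norm x \<le> 2 * norm x" by simp
      also have "\<dots> < r * (2 / r * norm x + e)" using r e by (simp add: field_simps)
      finally show "norm x < r * (2 / r * norm x + e)" .
    qed
    then show "mu x \<le> 2 / r * norm x + e" by (rule mu_le)
  qed
  have mu_U: "mu u \<le> 1" if "u \<in> U" for u using mu_le[of 1 u] that unfolding S_def by simp
  have hom_le: "mu (a *\<^sub>R x) \<le> a * mu x" if "a > 0" for a x
  proof -
    have "mu (a *\<^sub>R x) / a \<le> mu x" unfolding mu_def[of x]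
    proof (rule cInf_greatest[OF Sne])
      fix t assume "t \<in> S x"
      then have "a * t \<in> S (a *\<^sub>R x)" using that unfolding S_def by auto
      then have "mu (a *\<^sub>R x) \<le> a * t" by (rule mu_le)
      then show "mu (a *\<^sub>R x) / a \<le> t" using that by (simp add: divide_le_eq mult.commute)
    qed
    then show ?thesis using that by (simp add: divide_le_eq mult.commute)
  qed
  have hom: "mu (a *\<^sub>R x) = a * mu x" if "a > 0" for a x
  proof -
    have "mu x = mu ((1/a) *\<^sub>R (a *\<^sub>R x))" using that by simp
    also have "\<dots> \<le> (1/a) * mu (a *\<^sub>R x)" using hom_le[of "1/a" "a *\<^sub>R x"] that by simp
    finally have "a * mu x \<le> mu (a *\<^sub>R x)" using that by (simp add: field_simps)
    then show ?thesis using hom_le[OF that, of x] by linarith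
  qed
  have sub: "mu (x + y) \<le> mu x + mu y" for x y
  proof (rule field_le_epsilon)
    fix e :: real assume e: "e > 0"
    obtain s where s: "s \<in> S x" "s < mu x + e/2"
      using cInf_less_iff[OF Sne Sbdd, of x "mu x + e/2"] e unfolding mu_def by auto
    obtain t where t: "t \<in> S y" "t < mu y + e/2"
      using cInf_less_iff[OF Sne Sbdd, of y "mu y + e/2"] e unfolding mu_def by auto
    have sp: "s > 0" "(1/s) *\<^sub>R x \<in> U" and tp: "t > 0" "(1/t) *\<^sub>R y \<in> U" using s t unfolding S_def by auto
    have "(s/(s+t)) *\<^sub>R ((1/s) *\<^sub>R x) + (t/(s+t)) *\<^sub>R ((1/t) *\<^sub>R y) \<in> U"
      by (rule convU[OF sp(2) tp(2)]) (use sp tp in \<open>simp_all add: add_divide_distrib[symmetric]\<close>)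
    moreover have "(s/(s+t)) *\<^sub>R ((1/s) *\<^sub>R x) + (t/(s+t)) *\<^sub>R ((1/t) *\<^sub>R y) = (1/(s+t)) *\<^sub>R (x + y)"
    proof -
      have e1: "(s/(s+t)) * (1/s) = 1/(s+t)" and e2: "(t/(s+t)) * (1/t) = 1/(s+t)" using sp tp by (simp_all add: field_simps)
      show ?thesis by (simp only: scaleR_scaleR e1 e2 scaleR_add_right)
    qed
    ultimately have "s + t \<in> S (x + y)" using sp tp unfolding S_def by auto
    then have "mu (x + y) \<le> s + t" by (rule mu_le)
    then show "mu (x + y) \<le> mu x + mu y + e" using s t by linarith
  qed
  define x0 where "x0 = p - k0"
  have x0U: "x0 \<notin> U"
  proof
    assume "x0 \<in> U"
    then obtain k w where "x0 = k - k0 + w" "k \<in> K" "norm w < r" unfolding U_def by blast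
    then have "p = k + w" "k \<in> K" "norm w < r" unfolding x0_def by (auto simp: algebra_simps)
    then have "k \<in> ball p r" by (simp add: dist_norm)
    then show False using r(2) \<open>k \<in> K\<close> by blast
  qed
  have zU: "0 \<in> U" using ballU r by simp
  have mux0: "mu x0 \<ge> 1" unfolding mu_def
  proof (rule cInf_greatest[OF Sne])
    fix s assume "s \<in> S x0"
    then have s: "s > 0" "(1/s) *\<^sub>R x0 \<in> U" unfolding S_def by auto
    show "1 \<le> s"
    proof (rule ccontr)
      assume "\<not> 1 \<le> s"
      then have "s *\<^sub>R ((1/s) *\<^sub>R x0) + (1 - s) *\<^sub>R 0 \<in> U" using convU[OF s(2) zU, of s "1 - s"] s by simp
      moreover have "s *\<^sub>R ((1/s) *\<^sub>R x0) + (1 - s) *\<^sub>R 0 = x0" using s by simp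
      ultimately show False using x0U by simp
    qed
  qed
  have base: "t \<le> mu (t *\<^sub>R x0)" for t
  proof (cases "t > 0")
    case True then show ?thesis using hom[OF True] mux0 by simp
  next
    case False then show ?thesis using mu_nonneg[of "t *\<^sub>R x0"] by linarith
  qed
  obtain f where fadd: "\<And>x y. f (x + y) = f x + f y" and fsc: "\<And>r x. f (r *\<^sub>R x) = r * f x"
    and fx0: "f x0 = 1" and fmu: "\<And>x. f x \<le> mu x"
    using HB[of mu x0, OF sub hom base] by blast
  have fbl: "bounded_linear f"
  proof (rule bounded_linear_intro[where K="2/r"])
    fix x
    have "f x \<le> 2 / r * norm x" using fmu mu_bound order_trans by blast
    moreover have "- f x \<le> 2 / r * norm x"
      using fmu[of "-x"] mu_bound[of "-x"] fsc[of "-1" x] by simp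
    ultimately show "norm (f x) \<le> norm x * (2 / r)" by (simp add: abs_le_iff mult.commute)
  qed (use fadd fsc in auto)
  have x0nz: "x0 \<noteq> 0" using x0U zU by auto
  define s where "s = r / (2 * norm x0)"
  have s0: "s > 0" using r x0nz unfolding s_def by simp
  have nsx: "norm (s *\<^sub>R x0) < r" using r x0nz s0 unfolding s_def by simp
  have fk: "f k \<le> f k0 + 1 - s" if "k \<in> K" for k
  proof -
    have "k - k0 + s *\<^sub>R x0 \<in> U" unfolding U_def using that nsx by blast
    then have "f (k - k0 + s *\<^sub>R x0) \<le> 1" using fmu mu_U order_trans by blast
    moreover have "f (k - k0 + s *\<^sub>R x0) = f k - f k0 + s"
      using fadd fsc fx0 by (metis add_diff_cancel diff_add_cancel mult.right_neutral)
    ultimately show ?thesis by linarith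
  qed
  have "f p = f k0 + 1" using fadd[of k0 x0] fx0 unfolding x0_def by simp
  then show ?thesis using fbl fk s0 by (intro exI[of _ f] exI[of _ "f k0 + 1 - s"]) auto
qed

lemma weak_topspace [simp]: "topspace (weak_topology :: ('a::real_normed_vector) topology) = UNIV"
proof -
  have "UNIV \<in> {{x. f x \<in> U} | f U. bounded_linear (f :: 'a \<Rightarrow> real) \<and> open U}"
    by (rule CollectI, rule exI[of _ "\<lambda>x. 0"], rule exI[of _ UNIV]) simp
  then show ?thesis unfolding weak_topology_def by auto
qed

lemma weak_open_basis:
  fixes f :: "'a::real_normed_vector \<Rightarrow> real"
  assumes "bounded_linear f" "open U"
  shows "openin weak_topology {x. f x \<in> U}"
  unfolding weak_topology_def by (rule topology_generated_by_Basis) (use assms in blast)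

lemma weak_open_gt:
  fixes f :: "'a::real_normed_vector \<Rightarrow> real"
  assumes "bounded_linear f"
  shows "openin weak_topology {x. f x > c}" "openin weak_topology {x. f x < c}"
  using weak_open_basis[OF assms, of "{c<..}"] weak_open_basis[OF assms, of "{..<c}"] by auto

lemma weak_open_imp_open:
  assumes "openin (weak_topology :: ('a::real_normed_vector) topology) U"
  shows "open U"
proof -
  have "generate_topology_on {{x. f x \<in> U} | f U. bounded_linear (f :: 'a \<Rightarrow> real) \<and> open U} U"
    using assms unfolding weak_topology_def by (rule openin_topology_generated_by)
  then show ?thesis
  proof induct
    case Empty then show ?case by simp
  next
    case (Int a b) then show ?case by auto
  next
    case (UN K) then show ?case by auto
  next
    case (Basis s)
    then obtain f V where "s = {x. f x \<in> V}" "bounded_linear (f :: 'a \<Rightarrow> real)" "open V" by blast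
    then show ?case
      by (metis continuous_on_open_vimage linear_continuous_on open_UNIV vimage_def top_greatest subset_UNIV inf_top.right_neutral
          continuous_open_vimage linear_continuous_at)
  qed
qed

lemma closed_convex_weakly_closed:
  fixes K :: "'a::real_normed_vector set"
  assumes "closed K" "convex K"
  shows "closedin weak_topology K"
proof -
  have "openin weak_topology (- K)"
  proof (subst openin_subopen, intro ballI)
    fix p assume "p \<in> - K"
    then obtain f c where f: "bounded_linear (f::'a\<Rightarrow>real)" "c < f p" "\<forall>k\<in>K. f k \<le> c"
      using separation[OF assms] by blast
    show "\<exists>T. openin weak_topology T \<and> p \<in> T \<and> T \<subseteq> - K"
      by (rule exI[of _ "{x. f x > c}"]) (use f weak_open_gt[OF f(1), of c] in force)
  qed
  then show ?thesis unfolding closedin_def by (simp add: Compl_eq_Diff_UNIV)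
qed

lemma weak_Hausdorff: "Hausdorff_space (weak_topology :: ('a::real_normed_vector) topology)"
  unfolding Hausdorff_space_def
proof (intro allI impI)
  fix x y :: 'a assume "x \<in> topspace weak_topology \<and> y \<in> topspace weak_topology \<and> x \<noteq> y"
  then have "x \<notin> {y}" by auto
  then obtain f c where f: "bounded_linear (f::'a\<Rightarrow>real)" "c < f x" "f y \<le> c"
    using separation[of "{y}" x] by auto
  show "\<exists>U V. openin weak_topology U \<and> openin weak_topology V \<and> x \<in> U \<and> y \<in> V \<and> disjnt U V"
  proof -
    define m where "m = (c + f x)/2"
    have "c < m" "m < f x" using f unfolding m_def by auto
    then show ?thesis using f weak_open_gt[OF f(1), of m]
      by (intro exI[of _ "{z. f z > m}"] exI[of _ "{z. f z < m}"]) (auto simp: disjnt_def)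
  qed
qed

lemma weakly_compact_closed:
  fixes C :: "'a::real_normed_vector set"
  assumes "weakly_compact C" shows "closed C"
proof -
  have "closedin weak_topology C"
    using compactin_imp_closedin[OF weak_Hausdorff] assms unfolding weakly_compact_def by blast
  then have "openin weak_topology (- C)" unfolding closedin_def by (simp add: Compl_eq_Diff_UNIV)
  then show ?thesis using weak_open_imp_open closed_def by blast
qed

lemma radius_le:
  assumes "A \<noteq> {}" "\<And>y. y \<in> A \<Longrightarrow> norm (x - y) \<le> B"
  shows "radius_at x A \<le> B"
  unfolding radius_at_def by (rule cSUP_least) (use assms in auto)

lemma radius_ge:
  assumes "bounded A" "y \<in> A"
  shows "norm (x - y) \<le> radius_at x A"
proof -
  obtain a where a: "\<And>z. z \<in> A \<Longrightarrow> norm z \<le> a" using assms(1) unfolding bounded_iff by blast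
  have "bdd_above ((\<lambda>y. norm (x - y)) ` A)"
    unfolding bdd_above_def
  proof (rule exI[of _ "norm x + a"], intro ballI)
    fix u assume "u \<in> (\<lambda>y. norm (x - y)) ` A"
    then obtain z where "z \<in> A" "u = norm (x - z)" by blast
    then show "u \<le> norm x + a" using a[of z] norm_triangle_ineq4[of x z] by linarith
  qed
  then show ?thesis unfolding radius_at_def by (rule cSUP_upper[OF assms(2)])
qed

lemma funpow_in: "T ` S \<subseteq> S \<Longrightarrow> x \<in> S \<Longrightarrow> (T ^^ n) x \<in> S"
proof (induction n)
  case 0 then show ?case by simp
next
  case (Suc n)
  then have "(T ^^ n) x \<in> S" by simp
  then have "T ((T ^^ n) x) \<in> S" using Suc.prems(1) by (rule image_subset_iff[THEN iffD1, rule_format, rotated])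
  then show ?case by simp
qed

lemma orbit_in: "T ` S \<subseteq> S \<Longrightarrow> x \<in> S \<Longrightarrow> orbit T x \<subseteq> S"
proof
  fix y assume "T ` S \<subseteq> S" "x \<in> S" "y \<in> orbit T x"
  then show "y \<in> S" unfolding orbit_def using funpow_in[of T S x] by auto
qed

lemma self_in_orbit: "x \<in> orbit T x"
proof -
  have "(T ^^ 0) x \<in> range (\<lambda>n. (T ^^ n) x)" by (rule rangeI)
  then show ?thesis unfolding orbit_def by simp
qed

lemma KL:
  assumes TS: "T ` S \<subseteq> S" and SC: "S \<subseteq> C" and dim: "diminishes_orbit_radius C T" and w: "w \<in> S"
    and H: "\<And>y. y \<in> S \<Longrightarrow> norm (w - T y) \<le> (c + radius_at y (orbit T y)) / 2"
  shows "radius_at w (orbit T w) \<le> c"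
proof -
  define d where "d x = radius_at x (orbit T x)" for x
  have it: "(T ^^ n) w \<in> S" for n using funpow_in[OF TS w] .
  have dm: "d ((T ^^ n) w) \<le> d w" for n
  proof (induction n)
    case 0 then show ?case by simp
  next
    case (Suc n)
    have "d ((T ^^ Suc n) w) = d (T ((T ^^ n) w))" by simp
    also have "\<dots> \<le> d ((T ^^ n) w)" using dim it[of n] SC unfolding diminishes_orbit_radius_def d_def by blast
    finally show ?case using Suc by linarith
  qed
  have B0: "0 \<le> (c + d w) / 2" using H[OF w] norm_ge_zero[of "w - T w"] unfolding d_def by linarith
  have bd: "norm (w - y) \<le> (c + d w) / 2" if yo: "y \<in> orbit T w" for y
  proof -
    obtain n where n: "y = (T ^^ n) w" using yo unfolding orbit_def by blast
    show ?thesis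
    proof (cases n)
      case 0 then show ?thesis using n B0 by simp
    next
      case (Suc m)
      have "y = T ((T ^^ m) w)" using n Suc by simp
      then have "norm (w - y) \<le> (c + d ((T ^^ m) w)) / 2" using H[OF it[of m]] unfolding d_def by simp
      also have "\<dots> \<le> (c + d w) / 2" using dm[of m] by simp
      finally show ?thesis .
    qed
  qed
  have "d w \<le> (c + d w) / 2" unfolding d_def[of w]
  proof (rule radius_le)
    show "orbit T w \<noteq> {}" using self_in_orbit[of w T] by blast
  qed (use bd d_def in simp)
  then show ?thesis unfolding d_def by simp
qed

lemma half_mono: "a \<le> (b::real) \<Longrightarrow> (a + c) / 2 \<le> (b + c) / 2"
  by simp

lemma finite_chain_min:
  assumes "finite G" "G \<noteq> {}" "\<And>X Y. X \<in> G \<Longrightarrow> Y \<in> G \<Longrightarrow> X \<subseteq> Y \<or> Y \<subseteq> X"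
  shows "\<Inter>G \<in> G"
  using Inter_in_chain[of G UNIV] assms by (auto simp: subset_chain_def)

lemma main_lemma:
  fixes C :: "'a::banach set" and T :: "'a \<Rightarrow> 'a"
  assumes Cne: "C \<noteq> {}" and wc: "weakly_compact C" and cvx: "convex C"
    and TC: "T ` C \<subseteq> C" and kan: "orbitally_kannan C T" and dim: "diminishes_orbit_radius C T"
  shows "\<exists>K. closed K \<and> convex K \<and> K \<noteq> {} \<and> K \<subseteq> C \<and> T ` K \<subseteq> K \<and> bounded K \<and>
     (\<forall>w\<in>K. radius_at w (orbit T w) = diameter K)"
proof -
  define d where "d x = radius_at x (orbit T x)" for x
  have kanD: "norm (T x - T y) \<le> (d x + d y) / 2" if "x \<in> C" "y \<in> C" for x y
    using kan that unfolding orbitally_kannan_def d_def by blast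
  have Ccl: "closed C" using weakly_compact_closed[OF wc] .
  obtain x0 where x0: "x0 \<in> C" using Cne by blast
  define t where "t = d x0"
  define B0 where "B0 = (\<Inter>y\<in>C. cball (T y) ((t + d y) / 2))"
  have B0_iff: "z \<in> B0 \<longleftrightarrow> (\<forall>y\<in>C. norm (z - T y) \<le> (t + d y) / 2)" for z
    unfolding B0_def by (auto simp: dist_norm norm_minus_commute)
  define M where "M = C \<inter> B0"
  have Mcl: "closed M" unfolding M_def B0_def by (intro closed_Int Ccl closed_INT) auto
  have Mcv: "convex M" unfolding M_def B0_def by (intro convex_Int cvx convex_INT) auto
  have Tx0M: "T x0 \<in> M" unfolding M_def Int_iff B0_iff using TC x0 kanD[OF x0] t_def by auto
  have MT: "T ` M \<subseteq> M"
  proof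
    fix u assume "u \<in> T ` M"
    then obtain z where z: "z \<in> M" "u = T z" by blast
    have "z \<in> C" "\<And>y. y \<in> C \<Longrightarrow> norm (z - T y) \<le> (t + radius_at y (orbit T y)) / 2"
      using z unfolding M_def Int_iff B0_iff d_def by auto
    then have dz: "d z \<le> t" unfolding d_def by (rule KL[OF TC subset_refl dim])
    have "norm (T z - T y) \<le> (t + d y) / 2" if "y \<in> C" for y
      using kanD[OF \<open>z \<in> C\<close> that] half_mono[OF dz, of "d y"] by linarith
    then show "u \<in> M" using z TC \<open>z \<in> C\<close> unfolding M_def Int_iff B0_iff by auto
  qed
  have Mbd: "bounded M"
  proof -
    have "M \<subseteq> cball (T x0) ((t + d x0) / 2)" unfolding M_def B0_def using x0 by auto
    then show ?thesis using bounded_cball bounded_subset by blast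
  qed
  define A where "A = {K. K \<noteq> {} \<and> closed K \<and> convex K \<and> K \<subseteq> M \<and> T ` K \<subseteq> K}"
  have MA: "M \<in> A" unfolding A_def using Mcl Mcv MT Tx0M by auto
  have po: "partial_order_on A (relation_of (\<lambda>a b. b \<subseteq> a) A)"
    by (rule partial_order_on_relation_ofI) auto
  have "\<exists>m\<in>A. \<forall>a\<in>A. a \<subseteq> m \<longrightarrow> a = m"
  proof (rule predicate_Zorn[OF po])
    fix Ch assume ch: "Ch \<in> Chains (relation_of (\<lambda>a b. b \<subseteq> a) A)"
    have rel: "(X, Y) \<in> relation_of (\<lambda>a b. b \<subseteq> a) A \<or> (Y, X) \<in> relation_of (\<lambda>a b. b \<subseteq> a) A"
      if "X \<in> Ch" "Y \<in> Ch" for X Y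
      using ch that unfolding Chains_def by blast
    have ChA: "X \<in> A" if "X \<in> Ch" for X
      using rel[OF that that] unfolding relation_of_def by blast
    have tot: "X \<subseteq> Y \<or> Y \<subseteq> X" if "X \<in> Ch" "Y \<in> Ch" for X Y
      using rel[OF that] unfolding relation_of_def by blast
    show "\<exists>u\<in>A. \<forall>a\<in>Ch. u \<subseteq> a"
    proof (cases "Ch = {}")
      case True then show ?thesis using MA by blast
    next
      case False
      have inA: "X \<noteq> {} \<and> closed X \<and> convex X \<and> X \<subseteq> M \<and> T ` X \<subseteq> X" if "X \<in> Ch" for X
        using ChA[OF that] unfolding A_def by blast
      have "C \<inter> \<Inter>Ch \<noteq> {}"
      proof -
        have "compactin weak_topology C" using wc unfolding weakly_compact_def .
        moreover have "\<forall>X\<in>Ch. closedin weak_topology X"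
        proof
          fix X assume "X \<in> Ch"
          then have "closed X" "convex X" using inA by blast+
          then show "closedin weak_topology X" by (rule closed_convex_weakly_closed)
        qed
        moreover have "C \<inter> \<Inter>G \<noteq> {}" if "finite G" "G \<subseteq> Ch" for G
        proof (cases "G = {}")
          case True then show ?thesis using Cne by simp
        next
          case False
          have "\<Inter>G \<in> G" by (rule finite_chain_min[OF that(1) False]) (use tot that(2) in blast)
          then have "\<Inter>G \<in> Ch" using that(2) by blast
          then have "\<Inter>G \<noteq> {}" "\<Inter>G \<subseteq> M" using inA by blast+
          moreover have "M \<subseteq> C" unfolding M_def by blast
          ultimately show ?thesis by blast
        qed
        ultimately show ?thesis using compactin_fip[of weak_topology C] by metis
      qed
      then have ne: "\<Inter>Ch \<noteq> {}" by blast
      have "\<Inter>Ch \<in> A" unfolding A_def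
      proof (intro CollectI conjI)
        show "\<Inter>Ch \<noteq> {}" by (rule ne)
        show "closed (\<Inter>Ch)" using inA by (intro closed_Inter) blast
        show "convex (\<Inter>Ch)" using inA by (intro convex_Inter) blast
        show "\<Inter>Ch \<subseteq> M" using inA False by blast
        show "T ` \<Inter>Ch \<subseteq> \<Inter>Ch"
        proof (rule subsetI)
          fix u assume "u \<in> T ` \<Inter>Ch"
          then obtain v where v: "v \<in> \<Inter>Ch" "u = T v" by blast
          show "u \<in> \<Inter>Ch"
          proof (rule InterI)
            fix X assume "X \<in> Ch"
            then have "v \<in> X" "T ` X \<subseteq> X" using v inA by blast+
            then show "u \<in> X" using v by blast
          qed
        qed
      qed
      then show ?thesis by blast
    qed
  qed
  then obtain K where KA: "K \<in> A" and Kmin: "\<And>X. X \<in> A \<Longrightarrow> X \<subseteq> K \<Longrightarrow> X = K" by blast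
  have Kne: "K \<noteq> {}" and Kcl: "closed K" and Kcv: "convex K" and KM: "K \<subseteq> M" and TK: "T ` K \<subseteq> K"
    using KA unfolding A_def by auto
  have KC: "K \<subseteq> C" using KM M_def by blast
  have Kbd: "bounded K" using Mbd KM bounded_subset by blast
  have orbK: "orbit T w \<subseteq> K" if "w \<in> K" for w using orbit_in[OF TK that] .
  have dK: "d w \<le> d z \<and> (\<forall>y\<in>K. norm (w - T y) \<le> (d z + d y) / 2)" if w: "w \<in> K" and z: "z \<in> K" for w z
  proof -
    define c where "c = d z"
    define N where "N = K \<inter> (\<Inter>y\<in>K. cball (T y) ((c + d y) / 2))"
    have N_iff: "v \<in> N \<longleftrightarrow> v \<in> K \<and> (\<forall>y\<in>K. norm (v - T y) \<le> (c + d y) / 2)" for v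
      unfolding N_def by (auto simp: dist_norm norm_minus_commute)
    have dN: "d v \<le> c" if "v \<in> N" for v
      unfolding d_def by (rule KL[OF TK KC dim]) (use that N_iff d_def in auto)
    have "T z \<in> N" unfolding N_iff using TK z kanD KC c_def by auto
    moreover have "T ` N \<subseteq> N"
    proof
      fix u assume "u \<in> T ` N"
      then obtain v where v: "v \<in> N" "u = T v" by blast
      have "v \<in> K" using v N_iff by blast
      have "norm (T v - T y) \<le> (c + d y) / 2" if "y \<in> K" for y
      proof -
        have "v \<in> C" "y \<in> C" using \<open>v \<in> K\<close> that KC by blast+
        then show ?thesis using kanD[of v y] half_mono[OF dN[OF v(1)], of "d y"] by linarith
      qed
      then show "u \<in> N" using v TK \<open>v \<in> K\<close> unfolding N_iff by auto
    qed
    moreover have "closed N" unfolding N_def by (intro closed_Int Kcl closed_INT) auto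
    moreover have "convex N" unfolding N_def by (intro convex_Int Kcv convex_INT) auto
    moreover have "N \<subseteq> K" unfolding N_def by blast
    ultimately have "N \<in> A" unfolding A_def using KM by blast
    then have "N = K" using Kmin \<open>N \<subseteq> K\<close> by blast
    then show ?thesis using dN w c_def N_iff by blast
  qed
  obtain z0 where z0: "z0 \<in> K" using Kne by blast
  define c where "c = d z0"
  have dc: "d w = c" if "w \<in> K" for w using dK[OF that z0] dK[OF z0 that] c_def by linarith
  have TKc: "norm (w - T y) \<le> c" if "w \<in> K" "y \<in> K" for w y
    using dK[OF that(1) z0] that(2) dc[OF that(2)] c_def by auto
  define P where "P = K \<inter> (\<Inter>w\<in>K. cball w c)"
  have P_iff: "v \<in> P \<longleftrightarrow> v \<in> K \<and> (\<forall>w\<in>K. norm (w - v) \<le> c)" for v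
    unfolding P_def by (auto simp: dist_norm)
  have TKP: "T ` K \<subseteq> P" using TK TKc P_iff by auto
  have "P \<in> A" unfolding A_def
  proof (intro CollectI conjI)
    show "P \<noteq> {}" using TKP z0 by blast
    show "closed P" unfolding P_def by (intro closed_Int Kcl closed_INT) auto
    show "convex P" unfolding P_def by (intro convex_Int Kcv convex_INT) auto
    show "P \<subseteq> M" using KM P_def by blast
    show "T ` P \<subseteq> P" using TKP P_def by blast
  qed
  then have "P = K" using Kmin P_def by blast
  then have Kdist: "norm (w - v) \<le> c" if "w \<in> K" "v \<in> K" for w v using P_iff that by blast
  have diam_le: "diameter K \<le> c" by (rule diameter_le) (use Kne Kdist in auto)
  have c_le: "c \<le> diameter K"
  proof -
    have "d z0 \<le> diameter K" unfolding d_def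
    proof (rule radius_le)
      show "orbit T z0 \<noteq> {}" using self_in_orbit[of z0 T] by blast
      fix y assume "y \<in> orbit T z0"
      then have "y \<in> K" using orbK z0 by blast
      then show "norm (z0 - y) \<le> diameter K" using diameter_bounded_bound[OF Kbd z0] by (simp add: dist_norm)
    qed
    then show ?thesis using c_def by simp
  qed
  show ?thesis
  proof (intro exI[of _ K] conjI)
    show "\<forall>w\<in>K. radius_at w (orbit T w) = diameter K" using dc diam_le c_le d_def by force
  qed (use Kcl Kcv Kne KC TK Kbd in auto)
qed

lemma fixed_radius:
  assumes "T x = x"
  shows "radius_at x (orbit T x) = 0"
proof -
  have "(T ^^ n) x = x" for n by (induction n) (use assms in auto)
  then have "orbit T x = {x}" unfolding orbit_def by auto
  then show ?thesis unfolding radius_at_def by simp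
qed

theorem theorem4p5:
  fixes C :: "'a::banach set" and T :: "'a \<Rightarrow> 'a"
  assumes "C \<noteq> {}"
    and "weakly_compact C" and "convex C"
    and "T ` C \<subseteq> C"
    and "orbitally_kannan C T"
    and "diminishes_orbit_radius C T"
  shows "((\<nexists>x. x \<in> C \<and> T x = x) \<longrightarrow>
            (\<exists>K0. closed K0 \<and> convex K0 \<and> K0 \<subseteq> C \<and> T ` K0 \<subseteq> K0 \<and>
                  diameter K0 > 0 \<and>
                  (\<forall>x\<in>K0. radius_at x (orbit T x) = diameter K0)))
       \<and> ((\<forall>K0. closed K0 \<and> convex K0 \<and> K0 \<subseteq> C \<and> diameter K0 > 0 \<longrightarrow>
              (\<exists>x0\<in>K0. \<forall>y\<in>K0. radius_at x0 (orbit T y) < diameter K0))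
           \<longrightarrow> (\<exists>!x. x \<in> C \<and> T x = x))"
proof -
  obtain K where Kcl: "closed K" and Kcv: "convex K" and Kne: "K \<noteq> {}" and KC: "K \<subseteq> C"
    and TK: "T ` K \<subseteq> K" and Kbd: "bounded K" and Kd: "\<And>w. w \<in> K \<Longrightarrow> radius_at w (orbit T w) = diameter K"
    using main_lemma[OF assms] by blast
  have uniq: "x = y" if "x \<in> C" "T x = x" "y \<in> C" "T y = y" for x y
  proof -
    have "norm (T x - T y) \<le> (radius_at x (orbit T x) + radius_at y (orbit T y)) / 2"
      using assms(5) that unfolding orbitally_kannan_def by blast
    then have "norm (x - y) \<le> 0" using fixed_radius[of T x] fixed_radius[of T y] that by simp
    then show ?thesis by simp
  qed
  have pos: "diameter K > 0" if nf: "\<nexists>x. x \<in> C \<and> T x = x"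
  proof (rule ccontr)
    assume "\<not> diameter K > 0"
    obtain z where z: "z \<in> K" using Kne by blast
    then have "T z \<in> K" using TK by blast
    then have "dist z (T z) \<le> diameter K" using diameter_bounded_bound[OF Kbd z] by blast
    then have "dist z (T z) \<le> 0" using \<open>\<not> diameter K > 0\<close> by linarith
    then have "T z = z" by simp
    then show False using nf z KC by blast
  qed
  have P1: "(\<nexists>x. x \<in> C \<and> T x = x) \<longrightarrow>
            (\<exists>K0. closed K0 \<and> convex K0 \<and> K0 \<subseteq> C \<and> T ` K0 \<subseteq> K0 \<and>
                  diameter K0 > 0 \<and>
                  (\<forall>x\<in>K0. radius_at x (orbit T x) = diameter K0))"
    using Kcl Kcv KC TK pos Kd by blast
  have P2: "\<exists>!x. x \<in> C \<and> T x = x" if H: "\<forall>K0. closed K0 \<and> convex K0 \<and> K0 \<subseteq> C \<and> diameter K0 > 0 \<longrightarrow>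
              (\<exists>x0\<in>K0. \<forall>y\<in>K0. radius_at x0 (orbit T y) < diameter K0)"
  proof -
    have ex: "\<exists>x. x \<in> C \<and> T x = x"
    proof (rule ccontr)
      assume nf: "\<nexists>x. x \<in> C \<and> T x = x"
      have "diameter K > 0" using pos[OF nf] .
      then obtain x0 where x0: "x0 \<in> K" "\<forall>y\<in>K. radius_at x0 (orbit T y) < diameter K"
        using H Kcl Kcv KC by blast
      then have "radius_at x0 (orbit T x0) < diameter K" by blast
      then show False using Kd[OF x0(1)] by simp
    qed
    then show ?thesis using uniq by blast
  qed
  show ?thesis using P1 P2 by blast
qed

end
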